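(* Let $L$ be a Linnik constant. Then there is a constant $C>0$ (depending only on $L$) such that: (i) for every positive integer $n$ there exists a positive integer $m\le C n^{2L+1}$ with $d(m)=f(m)=n$; (ii) for every positive integer $n$ there exists a positive integer $m\le C n^{6L+3}$ with $d(m)/f(m)=n$; (iii) for all positive integers $a,b$ with $a\mid b$ and $\gcd\big(b/a,\ a\,\varphi(\mathrm{rad}(b))\big)=1$, there exists a positive integer $m\le C b^{2L+2}/a$ with $f(m)=a$ and $d(m)=b$.
   Context: For a positive integer $m$, let $\varphi(m)$ be Euler's function and $\lambda(m)$ the Carmichael function (the exponent of the multiplicative group $(\mathbb{Z}/m\mathbb{Z})^*$). Let $\mathrm{rad}(m)$ be the product of the distinct primes dividing $m$. Let $\delta=2$ if $4\mid m$ and $\delta=1$ otherwise. Define $$ d(m)=\gcd\big(m,\ \delta\,\varphi(\mathrm{rad}(m))\big),\qquad f(m)=\gcd\big(m,\ \delta\,\lambda(m)\varphi(\mathrm{rad}(m))/\varphi(m)\big). $$ A Linnik constant is a positive number $L$ such that there is an absolute constant $c>0$ with the property that for all integers $1\le a<q$ with $\gcd(a,q)=1$, the smallest prime $p(a,q)$ in the progression $\{a+jq: j\ge 0\}$ satisfies $p(a,q)\le c\, q^L$ (such $L$ exist by Linnik's theorem; e.g. $L=5$ works). *)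

theory Defs
  imports "HOL-Number_Theory.Number_Theory"
begin

definition rad :: "nat \<Rightarrow> nat" where
  "rad m = (\<Prod>p\<in>prime_factors m. p)"

definition carmichael :: "nat \<Rightarrow> nat" where
  "carmichael m = (LEAST e. 0 < e \<and> (\<forall>a. coprime a m \<longrightarrow> [a ^ e = 1] (mod m)))"

definition delta :: "nat \<Rightarrow> nat" where
  "delta m = (if 4 dvd m then 2 else 1)"

definition dfun :: "nat \<Rightarrow> nat" where
  "dfun m = gcd m (delta m * totient (rad m))"

text \<open>The quotient below is always an exact integer division.\<close>
definition ffun :: "nat \<Rightarrow> nat" where
  "ffun m = gcd m (delta m * carmichael m * totient (rad m) div totient m)"

definition linnik_constant :: "real \<Rightarrow> bool" where
  "linnik_constant L \<longleftrightarrow> 0 < L \<and> (\<exists>c>0. \<forall>a q::nat. 1 \<le> a \<and> a < q \<and> coprime a q \<longrightarrow>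
      (\<exists>j. prime (a + j * q) \<and> real (a + j * q) \<le> c * real q powr L))"

end

theory Submission
  imports Defs
begin

lemma carmichael_eq: "carmichael n = Carmichael n"
  unfolding carmichael_def
proof (rule Least_equality)
  show "0 < Carmichael n \<and> (\<forall>a. coprime a n \<longrightarrow> [a ^ Carmichael n = 1] (mod n))"
    using Carmichael_divides[of n "Carmichael n"] by (auto simp: coprime_commute)
next
  fix e assume e: "0 < e \<and> (\<forall>a. coprime a n \<longrightarrow> [a ^ e = 1] (mod n))"
  show "Carmichael n \<le> e"
  proof (cases "n > 1")
    case True
    have "Carmichael n dvd e" unfolding Carmichael_def
    proof (intro Lcm_least, safe)
      fix a assume "a \<in> totatives n"
      then have "coprime a n" by (simp add: totatives_def)
      with e have "[a^e = 1] (mod n)" by auto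
      thus "ord n a dvd e" using ord_divides' by auto
    qed
    thus ?thesis using e by (simp add: dvd_imp_le)
  next
    case False
    then have "n = 0 \<or> n = 1" by auto
    then show ?thesis using e by auto
  qed
qed

lemma rad_pos: "rad n > 0"
  unfolding rad_def by (intro prod_pos) (auto simp: in_prime_factors_iff prime_gt_0_nat)

lemma pf_rad: "prime_factors (rad n) = prime_factors n"
proof (safe)
  fix q assume "q \<in> prime_factors (rad n)"
  then have q: "prime q" "q dvd rad n" by auto
  then obtain p where "p \<in> prime_factors n" "q dvd p"
    unfolding rad_def using prime_dvd_prod_iff[of "prime_factors n" q "\<lambda>p. p"] by auto
  then show "q \<in> prime_factors n"
    using q by (metis in_prime_factors_imp_prime primes_dvd_imp_eq)
next
  fix q assume q: "q \<in> prime_factors n"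
  then have "q dvd rad n" unfolding rad_def by (intro dvd_prodI) auto
  then show "q \<in> prime_factors (rad n)" using q rad_pos[of n]
    by (auto simp: in_prime_factors_iff)
qed

lemma rad_dvd: "rad n dvd n"
proof (cases "n = 0")
  case False
  have "rad n dvd (\<Prod>p\<in>prime_factors n. p ^ multiplicity p n)"
    unfolding rad_def
    by (intro prod_dvd_prod dvd_power) (auto simp: prime_factors_multiplicity)
  also have "\<dots> = n" using False by (simp add: prime_factorization_nat[symmetric])
  finally show ?thesis .
qed simp

lemma rad_eq: "prime_factors x = prime_factors y \<Longrightarrow> rad x = rad y"
  by (simp add: rad_def)

lemma totient_rad:
  assumes "n > 0"
  shows "totient n = (n div rad n) * totient (rad n)"
proof -
  have r: "real (totient (rad n)) = real (rad n) * (\<Prod>p\<in>prime_factors n. 1 - 1 / real p)"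
    using totient_formula2[of "rad n"] by (simp add: pf_rad)
  have "real (totient n) * real (rad n) = real n * real (totient (rad n))"
    using totient_formula2[of n] r by simp
  then have "totient n * rad n = n * totient (rad n)"
    by (metis of_nat_eq_iff of_nat_mult)
  moreover have "n = (n div rad n) * rad n" using rad_dvd[of n] by simp
  ultimately have "totient n * rad n = (n div rad n) * totient (rad n) * rad n"
    by (metis mult.commute mult.left_commute)
  then show ?thesis using rad_pos[of n] by simp
qed

lemma rad_mult_coprime:
  assumes "coprime x y" "x > 0" "y > 0"
  shows "rad (x * y) = rad x * rad y"
proof -
  have "prime_factors (x*y) = prime_factors x \<union> prime_factors y"
    using assms by (simp add: prime_factors_product)
  moreover have "prime_factors x \<inter> prime_factors y = {}"
    using assms by (auto simp: in_prime_factors_iff dest: coprime_common_divisor_nat)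
  ultimately show ?thesis unfolding rad_def by (simp add: prod.union_disjoint)
qed

lemma prime_dvd_totient:
  assumes "prime q" "q dvd totient n" "n > 0"
  shows "q dvd n \<or> (\<exists>r\<in>prime_factors n. q dvd r - 1)"
proof -
  have "q dvd (\<Prod>p\<in>prime_factors n. p ^ (multiplicity p n - 1) * (p - 1))"
    using assms totient_formula1[of n] by simp
  then obtain p where p: "p \<in> prime_factors n" "q dvd p ^ (multiplicity p n - 1) * (p - 1)"
    using prime_dvd_prod_iff[of "prime_factors n" q] assms(1) by auto
  then have "q dvd p ^ (multiplicity p n - 1) \<or> q dvd p - 1"
    using assms(1) prime_dvd_mult_iff by blast
  then show ?thesis
  proof
    assume "q dvd p ^ (multiplicity p n - 1)"
    then have "q dvd p" using assms(1) prime_dvd_power by blast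
    then show ?thesis using p(1) by (auto simp: in_prime_factors_iff intro: dvd_trans)
  qed (use p in auto)
qed

lemma coprime_rad:
  assumes "coprime t (rad n)" "n > 0"
  shows "coprime t n"
proof (rule ccontr)
  assume "\<not> coprime t n"
  then obtain q where q: "prime q" "q dvd t" "q dvd n"
    using assms by (metis coprime_0_right_iff not_prime_1 prime_factor_nat gcd_nat.order_iff_strict
        coprime_iff_gcd_eq_1 gcd_dvd1 gcd_dvd2 dvd_trans)
  then have "q dvd rad n" unfolding rad_def using assms by (intro dvd_prodI) (auto simp: in_prime_factors_iff)
  then show False using q assms(1) by (meson coprime_common_divisor not_prime_unit)
qed

lemma delta_odd: "odd p \<Longrightarrow> delta (N * p) = delta N"
  unfolding delta_def
  by (metis coprime_dvd_mult_left_iff coprime_commute coprime_power_right_iff dvd_refl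
      odd_imp_coprime_nat power2_eq_square numeral_Bit0 mult_2 even_numeral)


lemma delta_cases: "delta N = 1 \<or> delta N = 2"
  unfolding delta_def by auto

lemma core:
  fixes N p :: nat
  assumes N: "N > 0" and p: "prime p" "p \<noteq> 2" and cop: "coprime p N"
    and nt: "\<not> p dvd totient N"
    and h4: "(N div rad N) dvd (delta N * (p - 1))"
  shows "carmichael (N*p) = lcm (Carmichael N) (p - 1)"
    and "dfun (N*p) = gcd N (delta N * totient (rad N) * (p - 1))"
    and "ffun (N*p) = gcd N (delta N * lcm (Carmichael N) (p - 1) div (N div rad N))"
proof -
  define lam where "lam = lcm (Carmichael N) (p - 1)"
  have p2: "p > 2" using p prime_ge_2_nat[of p] by linarith
  have oddp: "odd p" using p prime_odd_nat[of p] p2 by auto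
  have copN: "coprime N p" using cop by (simp add: coprime_commute)
  show lamc: "carmichael (N*p) = lcm (Carmichael N) (p - 1)"
    using Carmichael_mult_coprime[OF copN] Carmichael_prime[OF p(1)] by (simp add: carmichael_eq)
  have radp: "rad p = p" using p by (simp add: rad_def prime_prime_factors)
  have radNp: "rad (N*p) = rad N * p"
    using rad_mult_coprime[OF copN] N p radp prime_gt_0_nat by auto
  have copR: "coprime (rad N) p" using copN rad_dvd[of N] coprime_imp_coprime dvd_trans by blast
  have totR: "totient (rad (N*p)) = totient (rad N) * (p - 1)"
    using radNp totient_mult_coprime[OF copR] totient_prime[OF p(1)] by simp
  have totNp: "totient (N*p) = totient N * (p - 1)"
    using totient_mult_coprime[OF copN] totient_prime[OF p(1)] by simp
  have del: "delta (N*p) = delta N" using delta_odd[OF oddp] .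
  have pdel: "\<not> p dvd delta N" using delta_cases[of N] p2
    by (auto dest: dvd_imp_le)
  have pm1: "\<not> p dvd p - 1"
  proof
    assume "p dvd p - 1"
    then have "p \<le> p - 1" by (rule dvd_imp_le) (use p2 in auto)
    then show False using p2 by simp
  qed
  have totRN: "totient (rad N) dvd totient N" using totient_rad[OF N] by simp
  have pR: "\<not> p dvd totient (rad N)" using nt totRN dvd_trans by blast
  have "\<not> p dvd delta N * totient (rad N) * (p - 1)"
    using pdel pR pm1 p(1) by (simp add: prime_dvd_mult_iff)
  then have cZ: "coprime p (delta N * totient (rad N) * (p - 1))"
    by (rule prime_imp_coprime[OF p(1)])
  show "dfun (N*p) = gcd N (delta N * totient (rad N) * (p - 1))"
    unfolding dfun_def del totR
    using gcd_mult_left_right_cancel[of "delta N * totient (rad N) * (p - 1)" p N] cZ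
    by (simp add: coprime_commute mult.assoc)
  define K where "K = N div rad N"
  have K0: "K > 0" using rad_dvd[of N] N rad_pos[of N]
    by (auto simp: K_def dvd_imp_le div_greater_zero_iff)
  have totN: "totient N = K * totient (rad N)" using totient_rad[OF N] K_def by simp
  have "p - 1 dvd lam" by (simp add: lam_def)
  then have "delta N * (p - 1) dvd delta N * lam" by (rule mult_dvd_mono[OF dvd_refl])
  then have "K dvd delta N * lam" using h4 K_def dvd_trans by blast
  then obtain X where X: "delta N * lam = K * X" by blast
  have tR0: "totient (rad N) > 0" using rad_pos[of N] by simp
  have pm0: "p - 1 > 0" using p2 by simp
  have "delta N * lam * (totient (rad N) * (p - 1)) div (totient N * (p - 1)) = X"
    unfolding X totN using K0 tR0 pm0 by (simp add: mult.assoc mult.left_commute)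
  moreover have "X = delta N * lam div K" using X K0 by simp
  moreover have "\<not> p dvd X"
  proof
    assume "p dvd X"
    then have "p dvd delta N * lam" using X by simp
    then have "p dvd lam" using pdel p(1) by (simp add: prime_dvd_mult_iff)
    moreover have "lam dvd Carmichael N * (p - 1)" unfolding lam_def by (intro lcm_least) auto
    ultimately have "p dvd Carmichael N * (p - 1)" by (rule dvd_trans)
    then have "p dvd Carmichael N" using pm1 p(1) by (simp add: prime_dvd_mult_iff)
    then show False using nt Carmichael_dvd_totient[of N] dvd_trans by blast
  qed
  ultimately show "ffun (N*p) = gcd N (delta N * lcm (Carmichael N) (p - 1) div (N div rad N))"
    unfolding ffun_def del totR totNp lamc lam_def[symmetric] K_def[symmetric]
    using gcd_mult_left_right_cancel[of X p N] p(1)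
    by (simp add: prime_imp_coprime coprime_commute)
qed


lemma bound_aux:
  fixes N p Q ka kb :: nat and x \<alpha> \<beta> c L :: real
  assumes "0 < c" "0 \<le> L" "1 \<le> x" "0 \<le> \<alpha>" "0 < \<beta>"
    "real p \<le> c * real Q powr L" "real N \<le> \<alpha> * x ^ ka" "real Q \<le> \<beta> * x ^ kb"
  shows "real (N*p) \<le> \<alpha> * c * \<beta> powr L * x powr (real ka + real kb * L)"
proof -
  have x0: "x > 0" using assms by simp
  have "real Q powr L \<le> (\<beta> * x ^ kb) powr L"
    by (rule powr_mono2) (use assms in auto)
  also have "\<dots> = \<beta> powr L * x powr (real kb * L)"
    using assms x0 by (simp add: powr_mult powr_realpow[symmetric] powr_powr)
  finally have Q: "real Q powr L \<le> \<beta> powr L * x powr (real kb * L)" .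
  have "real (N*p) = real N * real p" by simp
  also have "\<dots> \<le> (\<alpha> * x ^ ka) * (c * (\<beta> powr L * x powr (real kb * L)))"
    apply (rule mult_mono)
    using assms Q x0 by (auto intro!: mult_left_mono order.trans[OF assms(6)])
  also have "\<dots> = \<alpha> * c * \<beta> powr L * (x powr real ka * x powr (real kb * L))"
    using x0 by (simp add: powr_realpow)
  also have "\<dots> = \<alpha> * c * \<beta> powr L * x powr (real ka + real kb * L)"
    by (simp add: powr_add)
  finally show ?thesis .
qed

lemma linnik_prime:
  assumes "linnik_constant L"
  shows "\<exists>c>0. \<forall>q r. 2 \<le> q \<longrightarrow> coprime r q \<longrightarrow>
           (\<exists>p. prime p \<and> [p = r] (mod q) \<and> real p \<le> c * real q powr L)"
proof -
  obtain c where c: "c > 0" and H: "\<forall>a q::nat. 1 \<le> a \<and> a < q \<and> coprime a q \<longrightarrow>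
      (\<exists>j. prime (a + j * q) \<and> real (a + j * q) \<le> c * real q powr L)"
    using assms unfolding linnik_constant_def by blast
  have "\<forall>q r. 2 \<le> q \<longrightarrow> coprime r q \<longrightarrow>
           (\<exists>p. prime p \<and> [p = r] (mod q) \<and> real p \<le> c * real q powr L)"
  proof (intro allI impI)
    fix q r :: nat assume q: "2 \<le> q" and cr: "coprime r q"
    define a where "a = r mod q"
    have ca: "coprime a q" unfolding a_def using cr q coprime_mod_left_iff[of q r] by simp
    have "a \<noteq> 0"
    proof
      assume "a = 0"
      then have "q dvd r" by (simp add: a_def mod_eq_0_iff_dvd)
      then have "q dvd 1" using cr coprime_common_divisor[of r q q] by simp
      then show False using q by simp
    qed
    moreover have "a < q" using q by (simp add: a_def)
    ultimately have "1 \<le> a \<and> a < q \<and> coprime a q" using ca by simp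
    then obtain j where j: "prime (a + j * q)" "real (a + j * q) \<le> c * real q powr L"
      using H by blast
    have "[a + j * q = r] (mod q)" by (simp add: a_def cong_def)
    then show "\<exists>p. prime p \<and> [p = r] (mod q) \<and> real p \<le> c * real q powr L" using j by blast
  qed
  then show ?thesis using c by blast
qed

lemma cong_shift:
  fixes p M R :: nat
  assumes "M > 0" "R > 0" "[p = 1 + M] (mod M * R)" "p \<ge> 1"
  shows "\<exists>t. p - 1 = M * t \<and> [t = 1] (mod R)"
proof -
  have "[p = 1 + M] (mod M)" using cong_dvd_modulus_nat[OF assms(3), of M] by simp
  moreover have "[1 + M = 1] (mod M)" unfolding cong_def by (rule mod_add_self2)
  ultimately have "[p = 1] (mod M)" by (rule cong_trans)
  then have "M dvd p - 1" by (rule cong_to_1_nat)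
  then obtain t where t: "p - 1 = M * t" by blast
  have pe: "p = 1 + M * t" using t assms(4) by simp
  from assms(3) have "[1 + M * t = 1 + M] (mod M * R)" unfolding pe .
  then have "[M * t = M * 1] (mod M * R)" using cong_add_lcancel_nat[of 1 "M*t" "M" "M*R"] by simp
  then have "M * (t mod R) = M * (1 mod R)" by (simp only: cong_def mod_mult_mult1)
  then have "t mod R = 1 mod R" using assms(1) by simp
  then show ?thesis using t by (auto simp: cong_def)
qed

lemma coprime_1_plus:
  fixes a b :: nat
  assumes "b dvd a"
  shows "coprime (1 + a) b"
proof (rule coprimeI)
  fix d assume "d dvd 1 + a" "d dvd b"
  then have da: "d dvd a" "d dvd 1 + a" using assms dvd_trans by blast+
  then have "d dvd 1" using dvd_add_right_iff[of d a 1] by (metis add.commute)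
  then show "is_unit d" by simp
qed

lemma coprime_of_dvd_pred:
  fixes p n :: nat
  assumes "n dvd p - 1" "p > 0"
  shows "coprime p n"
proof (rule coprimeI)
  fix d assume d: "d dvd p" "d dvd n"
  then have d1: "d dvd p - 1" using assms dvd_trans by blast
  have "d dvd p - (p - 1)" using dvd_diff_nat[OF d(1) d1] .
  moreover have "p - (p - 1) = 1" using assms by simp
  ultimately show "is_unit d" by simp
qed

lemma cong1_coprime: "[t = 1] (mod R) \<Longrightarrow> coprime t (R::nat)"
  using cong_imp_coprime[of 1 t R] by (simp add: cong_sym_eq)

lemma dvd_div_of_mult_dvd:
  fixes K n Y :: nat
  assumes "K > 0" "K * n dvd Y"
  shows "n dvd Y div K"
proof -
  obtain z where z: "Y = K * (n * z)" using assms(2) unfolding dvd_def by (auto simp: mult.assoc)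
  then have "Y div K = n * z" using assms(1) by simp
  then show ?thesis by simp
qed

lemma div_rad_dvd: "n div rad n dvd n"
proof -
  define r where "r = rad n"
  have r0: "r > 0" using rad_pos[of n] r_def by simp
  obtain k where k: "n = r * k" using rad_dvd[of n] r_def by blast
  then have "n div r = k" using r0 by simp
  then have "n div rad n = k" using r_def by simp
  then show ?thesis using k by simp
qed

lemma part1:
  fixes c L :: real and n :: nat
  assumes c: "c > 0" and L: "L > 0"
    and H: "\<forall>q r. 2 \<le> q \<longrightarrow> coprime r q \<longrightarrow>
           (\<exists>p. prime p \<and> [p = r] (mod q) \<and> real p \<le> c * real q powr L)"
    and n: "n \<ge> 2"
  shows "\<exists>m. 0 < m \<and> real m \<le> c * real n powr (2 * L + 1) \<and> dfun m = n \<and> ffun m = n"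
proof -
  have nn: "n \<le> n^2" using n by (simp add: power2_eq_square)
  have "2 \<le> n^2" using n nn by linarith
  then obtain p where p: "prime p" "[p = 1] (mod n^2)" "real p \<le> c * real (n^2) powr L"
    using H[rule_format, of "n^2" 1] by auto
  have p1: "p > 1" using p prime_gt_1_nat by blast
  have dv: "n^2 dvd p - 1" using p(2) by (rule cong_to_1_nat)
  then have le: "n^2 \<le> p - 1" using p1 by (intro dvd_imp_le) auto
  have ndv: "n dvd p - 1" using dv dvd_trans[of n "n^2"] by (simp add: power2_eq_square)
  have n0: "n > 0" using n by simp
  have p2: "p \<noteq> 2" using le n nn by auto
  have cop: "coprime p n" using ndv p1 by (intro coprime_of_dvd_pred) auto
  have nt: "\<not> p dvd totient n"
  proof
    assume "p dvd totient n"
    then have "p \<le> totient n" using n0 by (intro dvd_imp_le) auto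
    then show False using totient_le[of n] le nn p1 by linarith
  qed
  have h4: "(n div rad n) dvd (delta n * (p - 1))"
  proof -
    have "n div rad n dvd p - 1" using ndv div_rad_dvd[of n] dvd_trans by blast
    then show ?thesis by (rule dvd_mult)
  qed
  note cr = core[OF n0 p(1) p2 cop nt h4]
  have "dfun (n*p) = n" unfolding cr(2) using ndv by (intro gcd_nat.absorb1) simp
  moreover have "ffun (n*p) = n"
  proof -
    define K where "K = n div rad n"
    have K0: "K > 0" using rad_dvd[of n] n0 rad_pos[of n]
      by (auto simp: K_def dvd_imp_le div_greater_zero_iff)
    have "K * n dvd n * n" using div_rad_dvd[of n] unfolding K_def by (rule mult_dvd_mono) simp
    also have "n * n dvd p - 1" using dv by (simp add: power2_eq_square)
    also have "p - 1 dvd delta n * lcm (Carmichael n) (p - 1)" by simp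
    finally have "n dvd delta n * lcm (Carmichael n) (p - 1) div K"
      using K0 by (intro dvd_div_of_mult_dvd) auto
    then show ?thesis unfolding cr(3) K_def[symmetric] by (intro gcd_nat.absorb1)
  qed
  moreover have "real (n * p) \<le> c * real n powr (2 * L + 1)"
  proof -
    have "real (n * p) \<le> 1 * c * 1 powr L * real n powr (real 1 + real 2 * L)"
    proof (rule bound_aux[where Q="n^2" and ka=1 and kb=2])
      show "real p \<le> c * real (n\<^sup>2) powr L" using p(3) .
    qed (use c L n in auto)
    then show ?thesis by (simp add: algebra_simps)
  qed
  ultimately show ?thesis using n0 p1 by (intro exI[of _ "n*p"]) auto
qed


lemma npart:
  fixes x n :: nat
  assumes x: "x > 0" and n: "n > 0"
  shows "\<exists>G k. G dvd x \<and> G dvd n^k \<and> coprime (x div G) n"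
proof -
  define g where "g k = gcd x (n^k)" for k
  have gpos: "g k > 0" for k using x by (simp add: g_def)
  have gle: "g k \<le> x" for k using x by (simp add: g_def)
  have gmono: "g k dvd g (Suc k)" for k unfolding g_def by (rule gcd_mono) auto
  have "\<exists>k. g k = g (Suc k)"
  proof (rule ccontr)
    assume "\<not> ?thesis"
    then have ne: "g k \<noteq> g (Suc k)" for k by blast
    have lt: "g k < g (Suc k)" for k
    proof -
      have "g k \<le> g (Suc k)" using gmono[of k] gpos[of "Suc k"] by (rule dvd_imp_le)
      then show ?thesis using ne[of k] by linarith
    qed
    have ind: "k + 1 \<le> g k" for k
    proof (induction k)
      case 0
      then show ?case using gpos[of 0] by simp
    next
      case (Suc k)
      then show ?case using lt[of k] by linarith
    qed
    show False using ind[of x] gle[of x] by linarith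
  qed
  then obtain k where k: "g k = g (Suc k)" by blast
  define G where "G = g k"
  have Gx: "G dvd x" by (simp add: G_def g_def)
  have Gn: "G dvd n^k" by (simp add: G_def g_def)
  have G0: "G > 0" using gpos G_def by simp
  have "coprime (x div G) n"
  proof (rule coprimeI)
    fix d assume d: "d dvd x div G" "d dvd n"
    have xe: "x = G * (x div G)" using Gx by simp
    have "G * d dvd G * (x div G)" using d(1) by (rule mult_dvd_mono[OF dvd_refl])
    then have d1: "G * d dvd x" using xe by simp
    have "G * d dvd n^k * n" using Gn d(2) by (rule mult_dvd_mono)
    then have d2: "G * d dvd n ^ Suc k" by (simp add: mult.commute)
    have "G * d dvd g (Suc k)" unfolding g_def using d1 d2 by simp
    then have "G * d dvd G * 1" using k G_def by simp
    then have "d dvd 1" using G0 by simp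
    then show "is_unit d" by simp
  qed
  then show ?thesis using Gx Gn by blast
qed

lemma pf_subset_power: "prime_factors (n^k) \<subseteq> prime_factors (n::nat)"
proof (cases "k = 0")
  case False
  then show ?thesis by (simp add: prime_factors_power)
qed simp

lemma prime_dvd_rad: "prime q \<Longrightarrow> q dvd n \<Longrightarrow> n > 0 \<Longrightarrow> q dvd rad n"
  unfolding rad_def by (intro dvd_prodI) (auto simp: in_prime_factors_iff)


lemma part2:
  fixes c L :: real and n :: nat
  assumes c: "c > 0" and L: "L > 0"
    and H: "\<forall>q r. 2 \<le> q \<longrightarrow> coprime r q \<longrightarrow>
           (\<exists>p. prime p \<and> [p = r] (mod q) \<and> real p \<le> c * real q powr L)"
    and n: "n \<ge> 2"
  shows "\<exists>m. 0 < m \<and> real m \<le> 2 powr (1 + L) * c * real n powr (6 * L + 3) \<and>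
           real (dfun m) / real (ffun m) = real n"
proof -
  have n0: "n > 0" using n by simp
  define R where "R = rad n"
  define Ph where "Ph = totient R"
  define d0 where "d0 = (if even n then 2 else (1::nat))"
  define x where "x = d0 * Ph"
  have R0: "R > 0" using rad_pos R_def by simp
  have Ph0: "Ph > 0" using R0 Ph_def by simp
  have x0: "x > 0" using Ph0 by (simp add: x_def d0_def)
  obtain G k where G: "G dvd x" "G dvd n^k" "coprime (x div G) n" using npart[OF x0 n0] by blast
  define Hc where "Hc = x div G"
  have xG: "x = G * Hc" using G(1) Hc_def by simp
  have G0: "G > 0" using xG x0 by (cases "G = 0") auto
  define N where "N = n * G * R"
  have Rn: "R dvd n" using rad_dvd R_def by simp
  have pfG: "prime_factors G \<subseteq> prime_factors n"
  proof -
    have "prime_factors G \<subseteq> prime_factors (n^k)" using G(2) n0 by (intro dvd_prime_factors) auto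
    then show ?thesis using pf_subset_power[of n k] by blast
  qed
  have pfN: "prime_factors N = prime_factors n"
  proof -
    have "prime_factors N = prime_factors n \<union> prime_factors G \<union> prime_factors R"
      unfolding N_def using n0 G0 R0 by (simp add: prime_factors_product)
    also have "prime_factors R = prime_factors n" using pf_rad R_def by simp
    finally show ?thesis using pfG by blast
  qed
  have radN: "rad N = R" using rad_eq[OF pfN] R_def by simp
  have N0: "N > 0" using n0 G0 R0 by (simp add: N_def)
  have nN: "n \<le> N" using G0 R0 by (simp add: N_def)
  have delN: "delta N = d0"
  proof (cases "even n")
    case True
    then have "2 dvd R" unfolding R_def using n0 by (intro prime_dvd_rad) auto
    then have "2 * 2 dvd n * R" using True by (intro mult_dvd_mono) auto
    moreover have "n * R dvd N" by (simp add: N_def)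
    ultimately have "4 dvd N" by (metis dvd_trans num_double numeral_times_numeral)
    then show ?thesis using True by (simp add: delta_def d0_def)
  next
    case False
    have "odd (n^k)" using False by simp
    then have "odd G" using G(2) dvd_trans by blast
    moreover have "odd R" using False Rn dvd_trans by blast
    ultimately have "odd N" using False by (simp add: N_def)
    then have "\<not> 4 dvd N" by (metis dvd_trans even_numeral)
    then show ?thesis using False by (simp add: delta_def d0_def)
  qed
  define Q where "Q = N * Ph * R"
  have RNP: "R dvd N * Ph" using Rn by (simp add: N_def)
  have cop: "coprime (1 + N * Ph) Q"
    unfolding Q_def using coprime_1_plus[of "N*Ph" "N*Ph"] coprime_1_plus[OF RNP] by simp
  have Q2: "2 \<le> Q"
  proof -
    have "N \<le> N * Ph" using Ph0 by simp
    also have "\<dots> \<le> N * Ph * R" using R0 by simp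
    finally show ?thesis using n nN Q_def by linarith
  qed
  obtain p where p: "prime p" "[p = 1 + N * Ph] (mod Q)" "real p \<le> c * real Q powr L"
    using H[rule_format, OF Q2 cop] by blast
  have p1: "p > 1" using p(1) prime_gt_1_nat by blast
  obtain t where t: "p - 1 = (N * Ph) * t" "[t = 1] (mod R)"
    using cong_shift[of "N * Ph" R p] N0 Ph0 R0 p(2) p1 unfolding Q_def by auto
  have t0: "t > 0" using t(1) p1 by (cases "t = 0") auto
  have ct: "coprime t n" using cong1_coprime[OF t(2)] coprime_rad[of t n] n0 R_def by simp
  have Ndv: "N dvd p - 1" using t(1) by simp
  have Nle: "N \<le> p - 1" using Ndv p1 by (intro dvd_imp_le) auto
  have p2: "p \<noteq> 2" using Nle nN n by auto
  have copN: "coprime p N" using Ndv p1 by (intro coprime_of_dvd_pred) auto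
  have nt: "\<not> p dvd totient N"
  proof
    assume "p dvd totient N"
    then have "p \<le> totient N" using N0 by (intro dvd_imp_le) auto
    then show False using totient_le[of N] Nle p1 by linarith
  qed
  have h4: "(N div rad N) dvd (delta N * (p - 1))"
  proof -
    have "N div rad N dvd p - 1" using Ndv div_rad_dvd[of N] dvd_trans by blast
    then show ?thesis by (rule dvd_mult)
  qed
  note cr = core[OF N0 p(1) p2 copN nt h4]
  define K where "K = N div R"
  have NK: "N = K * R" using rad_dvd[of N] radN K_def by simp
  have K0: "K > 0" using NK N0 by (cases "K = 0") auto
  have totN: "totient N = K * Ph" using totient_rad[OF N0] radN K_def Ph_def by simp
  have CN: "Carmichael N dvd p - 1"
  proof -
    have "Carmichael N dvd K * Ph" using Carmichael_dvd_totient[of N] totN by simp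
    also have "K * Ph dvd N * Ph" using NK by simp
    also have "N * Ph dvd p - 1" using t(1) by simp
    finally show ?thesis .
  qed
  have lc: "lcm (Carmichael N) (p - 1) = p - 1" using CN by simp
  have dN: "dfun (N * p) = N"
    unfolding cr(2) using Ndv by (intro gcd_nat.absorb1) simp
  have "delta N * (p - 1) = K * (d0 * R * Ph * t)"
    using t(1) NK delN by (simp add: ac_simps)
  then have Xe: "delta N * (p - 1) div K = G * R * (Hc * t)"
    using K0 xG x_def by (simp add: ac_simps)
  have fN: "ffun (N * p) = G * R"
  proof -
    have "ffun (N * p) = gcd (G * R * n) (G * R * (Hc * t))"
      unfolding cr(3) lc radN K_def[symmetric] Xe by (simp add: N_def ac_simps)
    also have "\<dots> = G * R * gcd n (Hc * t)" by (simp add: gcd_mult_distrib_nat)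
    also have "gcd n (Hc * t) = 1"
      using G(3) ct Hc_def by (simp add: coprime_commute)
    finally show ?thesis by simp
  qed
  have ratio: "real (dfun (N * p)) / real (ffun (N * p)) = real n"
    unfolding dN fN using G0 R0 by (simp add: N_def)
  have GR: "G \<le> 2 * n"
  proof -
    have "G \<le> x" using G(1) x0 by (rule dvd_imp_le)
    also have "x \<le> 2 * n"
    proof -
      have "Ph \<le> R" using totient_le Ph_def by simp
      also have "R \<le> n" using Rn n0 by (rule dvd_imp_le)
      finally have "Ph \<le> n" .
      moreover have "d0 \<le> 2" by (simp add: d0_def)
      ultimately show ?thesis unfolding x_def by (rule mult_le_mono[rotated])
    qed
    finally show ?thesis .
  qed
  have Rle: "R \<le> n" using Rn n0 by (rule dvd_imp_le)
  have Phle: "Ph \<le> n" using totient_le[of R] Rle Ph_def by simp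
  have Nb: "N \<le> 2 * n^3"
  proof -
    have "N \<le> n * (2 * n) * n" unfolding N_def using GR Rle by (intro mult_le_mono) auto
    then show ?thesis by (simp add: power3_eq_cube ac_simps)
  qed
  have Qb: "Q \<le> 2 * n^5"
  proof -
    have "Q \<le> (2 * n^3) * n * n" unfolding Q_def using Nb Phle Rle by (intro mult_le_mono) auto
    then show ?thesis by (simp add: eval_nat_numeral ac_simps)
  qed
  have Nbr: "real N \<le> 2 * real n ^ 3" using Nb by (metis of_nat_le_iff of_nat_mult of_nat_numeral of_nat_power)
  have Qbr: "real Q \<le> 2 * real n ^ 5" using Qb by (metis of_nat_le_iff of_nat_mult of_nat_numeral of_nat_power)
  have "real (N * p) \<le> 2 * c * 2 powr L * real n powr (real 3 + real 5 * L)"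
    by (rule bound_aux[where Q=Q and ka=3 and kb=5]) (use c L n p(3) Nbr Qbr in auto)
  also have "\<dots> \<le> 2 * c * 2 powr L * real n powr (6 * L + 3)"
  proof -
    have "real n powr (real 3 + real 5 * L) \<le> real n powr (6 * L + 3)"
      using n L by (intro powr_mono) auto
    then show ?thesis using c by (intro mult_left_mono) auto
  qed
  also have "\<dots> = 2 powr (1 + L) * c * real n powr (6 * L + 3)"
    by (simp add: powr_add)
  finally have bd: "real (N * p) \<le> 2 powr (1 + L) * c * real n powr (6 * L + 3)" .
  show ?thesis using ratio bd N0 p1 by (intro exI[of _ "N * p"]) auto
qed


lemma not_dvd_pred: "(p::nat) > 1 \<Longrightarrow> \<not> p dvd p - 1"
proof
  assume "p > 1" "p dvd p - 1"
  then have "p \<le> p - 1" by (intro dvd_imp_le) auto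
  then show False using \<open>p > 1\<close> by simp
qed

lemma part3main:
  fixes c L :: real and a b :: nat
  assumes c: "c > 0" and L: "L > 0"
    and H: "\<forall>q r. 2 \<le> q \<longrightarrow> coprime r q \<longrightarrow>
           (\<exists>p. prime p \<and> [p = r] (mod q) \<and> real p \<le> c * real q powr L)"
    and a0: "a > 0" and b2: "b \<ge> 2" and ab: "a dvd b"
    and g1: "gcd (b div a) (a * totient (rad b)) = 1" and oddc: "odd (b div a)"
  shows "\<exists>m. 0 < m \<and> real m \<le> c * real b powr (2 * L + 2) / real a \<and> ffun m = a \<and> dfun m = b"
proof -
  define cc where "cc = b div a"
  have bac: "b = a * cc" using ab cc_def by simp
  have cc0: "cc > 0" using bac b2 by (cases "cc = 0") auto
  define Rc where "Rc = rad cc"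
  define Ph where "Ph = totient (rad b)"
  have cop1: "coprime cc (a * Ph)" using g1 unfolding cc_def Ph_def coprime_iff_gcd_eq_1 .
  then have cca: "coprime cc a" and ccP: "coprime cc Ph" by simp_all
  have Rcc: "Rc dvd cc" using rad_dvd Rc_def by simp
  have Rc0: "Rc > 0" using rad_pos Rc_def by simp
  define N where "N = a * cc * Rc"
  have N0: "N > 0" using a0 cc0 Rc0 by (simp add: N_def)
  have pfN: "prime_factors N = prime_factors b"
  proof -
    have "prime_factors N = prime_factors (a * cc) \<union> prime_factors Rc"
      unfolding N_def using a0 cc0 Rc0 by (simp add: prime_factors_product)
    moreover have "prime_factors Rc = prime_factors cc" using pf_rad Rc_def by simp
    moreover have "prime_factors cc \<subseteq> prime_factors (a * cc)" using a0 cc0 by (intro dvd_prime_factors) auto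
    ultimately show ?thesis using bac by auto
  qed
  have radN: "rad N = rad b" by (rule rad_eq[OF pfN])
  have radb: "rad b = rad a * Rc" unfolding bac Rc_def
    using rad_mult_coprime[of a cc] cca a0 cc0 by (simp add: coprime_commute)
  define ra where "ra = rad a"
  define Ka where "Ka = a div ra"
  have aK: "a = Ka * ra" using rad_dvd[of a] Ka_def ra_def by simp
  have ra0: "ra > 0" using rad_pos ra_def by simp
  have Ka0: "Ka > 0" using aK a0 by (cases "Ka = 0") auto
  have NK: "N = (Ka * cc) * (ra * Rc)" unfolding N_def using aK by (simp add: ac_simps)
  have "rad N = ra * Rc" using radN radb ra_def by simp
  then have KN: "N div rad N = Ka * cc" using NK ra0 Rc0 by simp
  define M where "M = a^2 * cc"
  have M0: "M > 0" using a0 cc0 M_def by simp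
  define Q where "Q = M * Rc"
  have RM: "Rc dvd M" using Rcc by (simp add: M_def)
  have cop: "coprime (1 + M) Q"
    unfolding Q_def using coprime_1_plus[of M M] coprime_1_plus[OF RM] by simp
  have bM: "b \<le> M" unfolding bac M_def using a0 cc0 by (simp add: power2_eq_square)
  have "M \<le> M * Rc" using Rc0 by simp
  then have Q2: "2 \<le> Q" using b2 bM unfolding Q_def by linarith
  obtain p where p: "prime p" "[p = 1 + M] (mod Q)" "real p \<le> c * real Q powr L"
    using H[rule_format, OF Q2 cop] by blast
  have p1: "p > 1" using p(1) prime_gt_1_nat by blast
  obtain t where t: "p - 1 = M * t" "[t = 1] (mod Rc)"
    using cong_shift[of M Rc p] M0 Rc0 p(2) p1 unfolding Q_def by auto
  have t0: "t > 0" using t(1) p1 by (cases "t = 0") auto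
  have ct: "coprime t cc" using cong1_coprime[OF t(2)] coprime_rad[of t cc] cc0 Rc_def by simp
  have Mdv: "M dvd p - 1" using t(1) by simp
  have Mle: "M \<le> p - 1" using Mdv p1 by (intro dvd_imp_le) auto
  have p2: "p \<noteq> 2" using Mle bM b2 by auto
  have pM: "\<not> p dvd M" using Mdv not_dvd_pred[OF p1] dvd_trans by blast
  have aM: "a dvd M" by (simp add: M_def power2_eq_square)
  have cM: "cc dvd M" by (simp add: M_def)
  have npN: "\<not> p dvd N"
  proof
    assume "p dvd N"
    then have "p dvd a \<or> p dvd cc \<or> p dvd Rc" unfolding N_def using p(1) by (simp add: prime_dvd_mult_iff)
    then have "p dvd a \<or> p dvd cc" using Rcc dvd_trans by blast
    then have "p dvd M" using aM cM dvd_trans by blast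
    then show False using pM by simp
  qed
  have copN: "coprime p N" using npN p(1) by (simp add: prime_imp_coprime)
  have nt: "\<not> p dvd totient N"
  proof
    assume pt: "p dvd totient N"
    show False
    proof (cases "p dvd N")
      case True then show False using npN by simp
    next
      case False
      then obtain q where q: "q \<in> prime_factors N" "p dvd q - 1"
        using prime_dvd_totient[OF p(1) pt N0] by blast
      then have qb: "q \<in> prime_factors b" using pfN by simp
      then have qp: "prime q" "q dvd a * cc" using bac by auto
      then have "q dvd a \<or> q dvd cc" by (simp add: prime_dvd_mult_iff)
      then have "q dvd M" using aM cM dvd_trans by blast
      then have "q dvd p - 1" using Mdv dvd_trans by blast
      then have "q \<le> p - 1" using p1 by (intro dvd_imp_le) auto
      moreover have "q > 1" using qp prime_gt_1_nat by blast
      moreover have "p \<le> q - 1" using q(2) qp prime_gt_1_nat[of q] by (intro dvd_imp_le) auto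
      ultimately show False by linarith
    qed
  qed
  have KM: "Ka * cc dvd M"
  proof -
    have "Ka * cc dvd a * cc" using aK by (simp add: mult_dvd_mono)
    also have "a * cc dvd M" by (simp add: M_def power2_eq_square)
    finally show ?thesis .
  qed
  have h4: "(N div rad N) dvd (delta N * (p - 1))"
    unfolding KN using KM Mdv dvd_trans dvd_mult by blast
  note cr = core[OF N0 p(1) p2 copN nt h4]
  define lam where "lam = lcm (Carmichael N) (p - 1)"
  have totN: "totient N = (Ka * cc) * Ph" using totient_rad[OF N0] KN radN Ph_def by simp
  have lamd: "lam dvd (p - 1) * Ph"
    unfolding lam_def
  proof (rule lcm_least)
    have "Carmichael N dvd (Ka * cc) * Ph" using Carmichael_dvd_totient[of N] totN by simp
    also have "(Ka * cc) * Ph dvd (p - 1) * Ph"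
      using dvd_trans[OF KM Mdv] by (rule mult_dvd_mono) simp
    finally show "Carmichael N dvd (p - 1) * Ph" .
  qed simp
  have "p - 1 dvd lam" unfolding lam_def by (rule dvd_lcm2)
  then obtain g where g: "lam = (p - 1) * g" by (rule dvdE)
  have "(p - 1) * g dvd (p - 1) * Ph" using lamd g by simp
  then have gP: "g dvd Ph" using p1 nat_mult_dvd_cancel_disj[of "p - 1" g Ph] by simp
  have cg: "coprime cc g" using ccP gP coprime_divisors[of cc cc g Ph] by simp
  have cdel: "coprime cc (delta N)"
  proof (cases "delta N = 1")
    case False
    then have "delta N = 2" using delta_cases[of N] by simp
    then show ?thesis using oddc cc_def by simp
  qed simp
  have cra: "coprime cc ra" using cca rad_dvd[of a] ra_def coprime_divisors[of cc cc "rad a" a] by simp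
  define Y where "Y = delta N * ra * t * g"
  have cY: "coprime cc Y" unfolding Y_def using cdel cra ct cg by (simp add: coprime_commute)
  have cRY: "coprime (cc * Rc) Y" using cY Rcc coprime_divisors[of Rc cc Y Y] by simp
  have "delta N * lam = (Ka * cc) * (a * Y)"
    unfolding g t(1) M_def Y_def power2_eq_square by (simp add: aK ac_simps)
  then have Xe: "delta N * lam div (Ka * cc) = a * Y" using Ka0 cc0 by simp
  have fN: "ffun (N * p) = a"
  proof -
    have "ffun (N * p) = gcd (a * (cc * Rc)) (a * Y)"
      unfolding cr(3) lam_def[symmetric] KN Xe by (simp add: N_def ac_simps)
    also have "\<dots> = a * gcd (cc * Rc) Y" by (simp add: gcd_mult_distrib_nat)
    also have "gcd (cc * Rc) Y = 1" using cRY by simp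
    finally show ?thesis by simp
  qed
  define Z where "Z = delta N * Ph * a * t"
  have cZ: "coprime cc Z" unfolding Z_def using cdel ccP cca ct by (simp add: coprime_commute)
  have cRZ: "coprime Rc Z" using cZ Rcc coprime_divisors[of Rc cc Z Z] by simp
  have dN: "dfun (N * p) = b"
  proof -
    have "dfun (N * p) = gcd N (delta N * Ph * (p - 1))"
      using cr(2) radN Ph_def by simp
    also have "\<dots> = gcd ((a * cc) * Rc) ((a * cc) * Z)"
      unfolding t(1) M_def Z_def power2_eq_square by (simp add: N_def ac_simps)
    also have "\<dots> = (a * cc) * gcd Rc Z" by (simp add: gcd_mult_distrib_nat)
    also have "gcd Rc Z = 1" using cRZ by simp
    finally show ?thesis using bac by simp
  qed
  have Nb: "real N \<le> (1 / real a) * real b ^ 2"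
  proof -
    have "N * a \<le> b ^ 2" unfolding N_def bac power2_eq_square
      using Rcc cc0 by (simp add: dvd_imp_le mult.commute mult.left_commute)
    then have "real N * real a \<le> real b ^ 2" by (metis of_nat_le_iff of_nat_mult of_nat_power)
    then show ?thesis using a0 by (simp add: field_simps)
  qed
  have Qb: "real Q \<le> 1 * real b ^ 2"
  proof -
    have "Q \<le> b ^ 2" unfolding Q_def M_def bac power2_eq_square
      using Rcc cc0 by (simp add: dvd_imp_le mult.commute mult.left_commute)
    then show ?thesis by (metis of_nat_le_iff of_nat_power mult_1)
  qed
  have "real (N * p) \<le> (1 / real a) * c * 1 powr L * real b powr (real 2 + real 2 * L)"
    by (rule bound_aux[where Q=Q and ka=2 and kb=2]) (use c L b2 p(3) Nb Qb a0 in auto)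
  then have bd: "real (N * p) \<le> c * real b powr (2 * L + 2) / real a"
    by (simp add: algebra_simps)
  show ?thesis using fN dN bd N0 p1 by (intro exI[of _ "N * p"]) auto
qed


lemma rad_twopow: "k > 0 \<Longrightarrow> rad (2^k) = 2"
  unfolding rad_def by (simp add: prime_factors_power prime_prime_factors)

lemma eight: "dfun 8 = 2" "ffun 8 = 1"
proof -
  have e: "(8::nat) = 2^3" by simp
  have r: "rad 8 = 2" unfolding e by (rule rad_twopow) simp
  have d: "delta 8 = 2" by (simp add: delta_def)
  have cm: "carmichael 8 = 2" using Carmichael_twopow_ge_8[of 3] by (simp add: carmichael_eq)
  have t8: "totient 8 = 4" unfolding e by (simp add: totient_prime_power)
  show "dfun 8 = 2" unfolding dfun_def r d by simp
  show "ffun 8 = 1" unfolding ffun_def r d cm t8 by simp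
qed

lemma part3pow:
  fixes c L :: real and k :: nat
  assumes c: "c > 0" and L: "L > 0"
    and H: "\<forall>q r. 2 \<le> q \<longrightarrow> coprime r q \<longrightarrow>
           (\<exists>p. prime p \<and> [p = r] (mod q) \<and> real p \<le> c * real q powr L)"
    and k: "k \<ge> 2"
  shows "\<exists>m. 0 < m \<and> real m \<le> 2 * c * real (2^k) powr (2 * L + 2) \<and> ffun m = 1 \<and> dfun m = 2^k"
proof -
  define M where "M = (2::nat)^(k-1)"
  have kk: "(2::nat)^k = M * 2" unfolding M_def using k by (cases k) auto
  have "(2::nat)^1 \<le> 2^(k-1)" by (rule power_increasing) (use k in auto)
  then have M2: "M \<ge> 2" unfolding M_def by simp
  have evM: "even M" unfolding M_def using k by simp
  define N where "N = (2::nat)^(k+1)"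
  have NM: "N = M * 4" unfolding N_def using kk by simp
  have cop: "coprime (1 + M) (2^k)"
  proof -
    have "odd (1 + M)" using evM by simp
    then have "coprime (1 + M) 2" by (simp add: odd_imp_coprime_nat)
    then show ?thesis by simp
  qed
  have Q2: "2 \<le> (2::nat)^k" using kk M2 by simp
  obtain p where p: "prime p" "[p = 1 + M] (mod 2^k)" "real p \<le> c * real (2^k) powr L"
    using H[rule_format, OF Q2 cop] by blast
  have p1: "p > 1" using p(1) prime_gt_1_nat by blast
  obtain t where t: "p - 1 = M * t" "[t = 1] (mod 2)"
    using cong_shift[of M 2 p] M2 p(2) p1 kk by auto
  have t0: "t > 0" using t(1) p1 by (cases "t = 0") auto
  have oddt: "odd t" using t(2) by (simp add: cong_def odd_iff_mod_2_eq_one)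
  have pe: "p = 1 + M * t" using t(1) p1 by simp
  have oddp: "odd p" using pe evM by simp
  have p2: "p \<noteq> 2" using oddp by auto
  have N0: "N > 0" by (simp add: N_def)
  have copN: "coprime p N" unfolding N_def using oddp by (simp add: odd_imp_coprime_nat coprime_commute)
  have totN: "totient N = 2^k" unfolding N_def using totient_prime_power[of 2 "k+1"] by simp
  have nt: "\<not> p dvd totient N"
  proof
    assume "p dvd totient N"
    then have "p dvd 2^k" using totN by simp
    then have "p dvd 2" using prime_dvd_power[OF p(1)] by blast
    then have "p \<le> 2" by (rule dvd_imp_le) simp
    then show False using p1 p2 by simp
  qed
  have radN: "rad N = 2" unfolding N_def by (rule rad_twopow) simp
  have delN: "delta N = 2" unfolding delta_def NM by simp
  have KN: "N div rad N = 2^k" using radN by (simp add: N_def)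
  have h4: "(N div rad N) dvd (delta N * (p - 1))" unfolding KN delN t(1) kk by simp
  note cr = core[OF N0 p(1) p2 copN nt h4]
  have CN: "Carmichael N = M" unfolding N_def M_def using k Carmichael_twopow_ge_8[of "k+1"] by simp
  have lc: "lcm (Carmichael N) (p - 1) = p - 1" unfolding CN t(1) by simp
  have dN: "dfun (N * p) = 2^k"
  proof -
    have "dfun (N * p) = gcd N (2 * 1 * (M * t))"
      using cr(2) radN delN t(1) by simp
    also have "\<dots> = gcd ((M * 2) * 2) ((M * 2) * t)" unfolding NM by (rule arg_cong2[where f=gcd]) (simp_all add: mult_ac)
    also have "\<dots> = (M * 2) * gcd 2 t" by (simp add: gcd_mult_distrib_nat)
    also have "gcd 2 t = 1" using oddt by (simp add: odd_imp_coprime_nat coprime_commute)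
    finally show ?thesis using kk by simp
  qed
  have fN: "ffun (N * p) = 1"
  proof -
    have "2 * (p - 1) div 2^k = t" unfolding t(1) kk using M2 by simp
    then have "ffun (N * p) = gcd N t" unfolding cr(3) lc delN KN by simp
    also have "\<dots> = 1" unfolding N_def using oddt
      by (simp add: odd_imp_coprime_nat coprime_commute)
    finally show ?thesis .
  qed
  have Nb: "real N \<le> 2 * real (2^k::nat) ^ 1" unfolding N_def by simp
  have Qb: "real (2^k::nat) \<le> 1 * real (2^k::nat) ^ 1" by simp
  have "real (N * p) \<le> 2 * c * 1 powr L * real (2^k::nat) powr (real 1 + real 1 * L)"
    by (rule bound_aux[where Q="2^k" and ka=1 and kb=1]) (use c L Q2 p(3) Nb Qb in auto)
  also have "\<dots> \<le> 2 * c * real (2^k::nat) powr (2 * L + 2)"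
  proof -
    have "real (2^k::nat) powr (real 1 + real 1 * L) \<le> real (2^k::nat) powr (2 * L + 2)"
      using Q2 L by (intro powr_mono) auto
    then show ?thesis using c by simp
  qed
  finally show ?thesis using fN dN N0 p1 by (intro exI[of _ "N * p"]) auto
qed


lemma one_vals: "dfun 1 = 1" "ffun 1 = 1"
  by (simp_all add: dfun_def ffun_def)

lemma part3:
  fixes c L :: real and a b :: nat
  assumes c: "c > 0" and L: "L > 0"
    and H: "\<forall>q r. 2 \<le> q \<longrightarrow> coprime r q \<longrightarrow>
           (\<exists>p. prime p \<and> [p = r] (mod q) \<and> real p \<le> c * real q powr L)"
    and a0: "a > 0" and b0: "b > 0" and ab: "a dvd b"
    and g1: "gcd (b div a) (a * totient (rad b)) = 1"
  shows "\<exists>m. 0 < m \<and> real m \<le> (2 * c + 8) * real b powr (2 * L + 2) / real a \<and> ffun m = a \<and> dfun m = b"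
proof (cases "b = 1")
  case True
  then have "a = 1" using ab by simp
  then show ?thesis using True c one_vals by (intro exI[of _ 1]) auto
next
  case False
  then have b2: "b \<ge> 2" using b0 by simp
  have bpos: "real b powr (2 * L + 2) \<ge> 1" using b2 L by (intro ge_one_powr_ge_zero) auto
  show ?thesis
  proof (cases "odd (b div a)")
    case True
    obtain m where m: "0 < m" "real m \<le> c * real b powr (2 * L + 2) / real a" "ffun m = a" "dfun m = b"
      using part3main[OF c L H a0 b2 ab g1 True] by blast
    have "c * real b powr (2 * L + 2) / real a \<le> (2 * c + 8) * real b powr (2 * L + 2) / real a"
      using c bpos a0 by (intro divide_right_mono mult_right_mono) auto
    then show ?thesis using m by (intro exI[of _ m]) auto
  next
    case False
    define cc where "cc = b div a"
    define Ph where "Ph = totient (rad b)"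
    have bac: "b = a * cc" using ab cc_def by simp
    have cop1: "coprime cc (a * Ph)" using g1 unfolding cc_def Ph_def coprime_iff_gcd_eq_1 .
    have evc: "even cc" using False cc_def by simp
    have oaP: "odd (a * Ph)"
    proof
      assume "even (a * Ph)"
      then show False using cop1 coprime_common_divisor[of cc "a * Ph" 2] evc by auto
    qed
    then have oa: "odd a" and oP: "odd Ph" by auto
    have rle: "rad b \<le> 2" using oP totient_even[of "rad b"] Ph_def by (cases "rad b > 2") auto
    have "2 dvd rad b" using evc bac b0 by (intro prime_dvd_rad) auto
    then have r2: "rad b = 2" using rle rad_pos[of b] by (auto dest: dvd_imp_le)
    have pfb: "prime_factors b = {2}" using pf_rad[of b] r2 by (simp add: prime_prime_factors)
    define kk where "kk = multiplicity 2 b"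
    have bk: "b = 2^kk" using prime_factorization_nat[OF b0] pfb kk_def by simp
    obtain i where i: "a = 2^i" using ab bk divides_primepow_nat[of 2 a kk] by auto
    then have a1: "a = 1" using oa by (cases i) auto
    have kk1: "kk \<ge> 1" using bk b2 by (cases kk) auto
    show ?thesis
    proof (cases "kk = 1")
      case True
      then have b_2: "b = 2" using bk by simp
      have "8 \<le> (2 * c + 8) * real b powr (2 * L + 2)"
      proof -
        have "8 \<le> 2 * c + 8" using c by simp
        also have "\<dots> \<le> (2 * c + 8) * real b powr (2 * L + 2)" using c bpos by simp
        finally show ?thesis .
      qed
      then show ?thesis using eight a1 b_2 by (intro exI[of _ 8]) auto
    next
      case False
      then have "kk \<ge> 2" using kk1 by simp
      from part3pow[OF c L H this] obtain m where
        m: "0 < m" "real m \<le> 2 * c * real (2^kk::nat) powr (2 * L + 2)" "ffun m = 1" "dfun m = 2^kk"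
        by blast
      have "2 * c * real (2^kk::nat) powr (2 * L + 2) \<le> (2 * c + 8) * real b powr (2 * L + 2) / real a"
        using bk a1 c bpos by (simp add: mult_right_mono)
      then have "real m \<le> (2 * c + 8) * real b powr (2 * L + 2) / real a" using m(2) by linarith
      then show ?thesis using m a1 bk by (intro exI[of _ m]) auto
    qed
  qed
qed

theorem theorem1p3:
  fixes L :: real
  assumes "linnik_constant L"
  shows "\<exists>C>0.
    (\<forall>n::nat. 0 < n \<longrightarrow> (\<exists>m::nat. 0 < m \<and> real m \<le> C * real n powr (2 * L + 1) \<and>
        dfun m = n \<and> ffun m = n)) \<and>
    (\<forall>n::nat. 0 < n \<longrightarrow> (\<exists>m::nat. 0 < m \<and> real m \<le> C * real n powr (6 * L + 3) \<and>
        real (dfun m) / real (ffun m) = real n)) \<and>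
    (\<forall>a b::nat. 0 < a \<and> 0 < b \<and> a dvd b \<and> gcd (b div a) (a * totient (rad b)) = 1 \<longrightarrow>
        (\<exists>m::nat. 0 < m \<and> real m \<le> C * real b powr (2 * L + 2) / real a \<and>
           ffun m = a \<and> dfun m = b))"
proof -
  have L: "L > 0" using assms unfolding linnik_constant_def by simp
  obtain c where c: "c > 0" and H: "\<forall>q r. 2 \<le> q \<longrightarrow> coprime r q \<longrightarrow>
           (\<exists>p. prime p \<and> [p = r] (mod q) \<and> real p \<le> c * real q powr L)"
    using linnik_prime[OF assms] by blast
  define C where "C = 2 powr (1 + L) * c + 8"
  have two: "2 \<le> 2 powr (1 + L)"
  proof -
    have "(2::real) powr 1 \<le> 2 powr (1 + L)" using L by (intro powr_mono) auto
    then show ?thesis by simp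
  qed
  have "1 * c \<le> 2 powr (1 + L) * c" using two c by (intro mult_right_mono) auto
  then have Cc: "c \<le> C" unfolding C_def by linarith
  have "2 * c \<le> 2 powr (1 + L) * c" using two c by (intro mult_right_mono) auto
  then have C2: "2 * c + 8 \<le> C" unfolding C_def by linarith
  have C3: "2 powr (1 + L) * c \<le> C" unfolding C_def by simp
  have C8: "8 \<le> C" using two c unfolding C_def by simp
  have C0: "C > 0" using C8 by simp
  have P1: "\<forall>n::nat. 0 < n \<longrightarrow> (\<exists>m::nat. 0 < m \<and> real m \<le> C * real n powr (2 * L + 1) \<and>
        dfun m = n \<and> ffun m = n)"
  proof (intro allI impI)
    fix n :: nat assume n: "0 < n"
    show "\<exists>m::nat. 0 < m \<and> real m \<le> C * real n powr (2 * L + 1) \<and> dfun m = n \<and> ffun m = n"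
    proof (cases "n = 1")
      case True
      then show ?thesis using one_vals C8 by (intro exI[of _ 1]) auto
    next
      case False
      then have "n \<ge> 2" using n by simp
      from part1[OF c L H this] obtain m where
        m: "0 < m" "real m \<le> c * real n powr (2 * L + 1)" "dfun m = n" "ffun m = n" by blast
      have "c * real n powr (2 * L + 1) \<le> C * real n powr (2 * L + 1)"
        using Cc by (intro mult_right_mono) auto
      then show ?thesis using m by (intro exI[of _ m]) auto
    qed
  qed
  have P2: "\<forall>n::nat. 0 < n \<longrightarrow> (\<exists>m::nat. 0 < m \<and> real m \<le> C * real n powr (6 * L + 3) \<and>
        real (dfun m) / real (ffun m) = real n)"
  proof (intro allI impI)
    fix n :: nat assume n: "0 < n"
    show "\<exists>m::nat. 0 < m \<and> real m \<le> C * real n powr (6 * L + 3) \<and> real (dfun m) / real (ffun m) = real n"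
    proof (cases "n = 1")
      case True
      then show ?thesis using one_vals C8 by (intro exI[of _ 1]) auto
    next
      case False
      then have "n \<ge> 2" using n by simp
      from part2[OF c L H this] obtain m where
        m: "0 < m" "real m \<le> 2 powr (1 + L) * c * real n powr (6 * L + 3)"
           "real (dfun m) / real (ffun m) = real n" by blast
      have "2 powr (1 + L) * c * real n powr (6 * L + 3) \<le> C * real n powr (6 * L + 3)"
        using C3 by (intro mult_right_mono) auto
      then show ?thesis using m by (intro exI[of _ m]) auto
    qed
  qed
  have P3: "\<forall>a b::nat. 0 < a \<and> 0 < b \<and> a dvd b \<and> gcd (b div a) (a * totient (rad b)) = 1 \<longrightarrow>
        (\<exists>m::nat. 0 < m \<and> real m \<le> C * real b powr (2 * L + 2) / real a \<and>
           ffun m = a \<and> dfun m = b)"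
  proof (intro allI impI)
    fix a b :: nat assume h: "0 < a \<and> 0 < b \<and> a dvd b \<and> gcd (b div a) (a * totient (rad b)) = 1"
    have "\<exists>m. 0 < m \<and> real m \<le> (2 * c + 8) * real b powr (2 * L + 2) / real a \<and> ffun m = a \<and> dfun m = b"
      by (rule part3[OF c L H]) (use h in auto)
    then obtain m where m: "0 < m" "real m \<le> (2 * c + 8) * real b powr (2 * L + 2) / real a"
        "ffun m = a" "dfun m = b" by blast
    have "(2 * c + 8) * real b powr (2 * L + 2) / real a \<le> C * real b powr (2 * L + 2) / real a"
      using C2 h by (intro divide_right_mono mult_right_mono) auto
    then show "\<exists>m::nat. 0 < m \<and> real m \<le> C * real b powr (2 * L + 2) / real a \<and> ffun m = a \<and> dfun m = b"
      using m by (intro exI[of _ m]) auto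
  qed
  show ?thesis by (rule exI[of _ C], intro conjI C0 P1 P2 P3)
qed


end
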